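(* For every integer $v\ge 1$, with $\partial_z=d/dz$, $$\prod_{n=1}^{v-1}\left(\partial_z^2+4n^2\right)\csc^2 z=(2v-1)!\,\csc^{2v}z .$$ (For $v=1$ the product is empty and the identity reads $\csc^2 z=\csc^2 z$.)
   Context: The identity is between functions of a real (or complex) variable $z$ away from the zeros of $\sin z$. The operators $\partial_z^2+4n^2$ commute, so the order of the product is irrelevant. *)

theory Defs
  imports "HOL-Analysis.Analysis"
begin

definition shift_op :: "nat \<Rightarrow> (real \<Rightarrow> real) \<Rightarrow> (real \<Rightarrow> real)" where
  "shift_op n f = (\<lambda>z. deriv (deriv f) z + 4 * (real n)^2 * f z)"

fun prod_op :: "nat \<Rightarrow> (real \<Rightarrow> real) \<Rightarrow> (real \<Rightarrow> real)" where
  "prod_op 0 f = f"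
| "prod_op (Suc m) f = shift_op (Suc m) (prod_op m f)"

definition cosec :: "real \<Rightarrow> real" where
  "cosec z = 1 / sin z"

end

theory Submission
  imports Defs
begin

lemma ev_sin: "sin (z::real) \<noteq> 0 \<Longrightarrow> eventually (\<lambda>x. sin x \<noteq> 0) (nhds z)"
  by (intro eventually_nhds_in_open[of "{x. sin x \<noteq> 0}", simplified]
        open_Collect_neq continuous_intros) auto

lemma d1:
  assumes "sin w \<noteq> 0"
  shows "((\<lambda>x. c * inverse (sin x) ^ N) has_real_derivative
          (- c * real N * cos w * inverse (sin w) ^ (N+1))) (at w)"
proof -
  have "((\<lambda>x. c * inverse (sin x) ^ N) has_real_derivative
          c * (real N * inverse (sin w) ^ (N - 1) * (- inverse (sin w) * cos w * inverse (sin w)))) (at w)"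
    using assms by (auto intro!: derivative_eq_intros)
  moreover have "c * (real N * inverse (sin w) ^ (N - 1) * (- inverse (sin w) * cos w * inverse (sin w)))
      = - c * real N * cos w * inverse (sin w) ^ (N+1)"
  proof (cases N)
    case (Suc n)
    then show ?thesis by (simp add: algebra_simps)
  qed simp
  ultimately show ?thesis by (simp only:)
qed

lemma d2:
  assumes "sin w \<noteq> 0"
  shows "((\<lambda>x. - c * real N * cos x * inverse (sin x) ^ (N+1)) has_real_derivative
          (c * real N * real (N+1) * inverse (sin w) ^ (N+2) - c * real N ^ 2 * inverse (sin w) ^ N)) (at w)"
proof -
  have "((\<lambda>x. - c * real N * cos x * inverse (sin x) ^ (N+1)) has_real_derivative
          (- c * real N * (- sin w * inverse (sin w) ^ (N+1) + cos w * (real (N+1) * inverse (sin w) ^ N * (- inverse (sin w) * cos w * inverse (sin w)))))) (at w)"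
  proof -
    have a: "((\<lambda>x. 1 * inverse (sin x) ^ (N+1)) has_real_derivative
          (- 1 * real (N+1) * cos w * inverse (sin w) ^ (N+1+1))) (at w)" by (rule d1[OF assms])
    have b: "((\<lambda>x. - c * real N * cos x) has_real_derivative (- c * real N * (- sin w))) (at w)"
      by (auto intro!: derivative_eq_intros)
    have "((\<lambda>x. (- c * real N * cos x) * (1 * inverse (sin x) ^ (N+1))) has_real_derivative
       (- c * real N * cos w) * (- 1 * real (N+1) * cos w * inverse (sin w) ^ (N+1+1))
       + (- c * real N * (- sin w)) * (1 * inverse (sin w) ^ (N+1))) (at w)"
      by (rule DERIV_mult'[OF b a])
    moreover have "(- c * real N * cos w) * (- 1 * real (N+1) * cos w * inverse (sin w) ^ (N+1+1))
       + (- c * real N * (- sin w)) * (1 * inverse (sin w) ^ (N+1)) =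
       (- c * real N * (- sin w * inverse (sin w) ^ (N+1) + cos w * (real (N+1) * inverse (sin w) ^ N * (- inverse (sin w) * cos w * inverse (sin w)))))"
      by (simp add: algebra_simps)
    ultimately show ?thesis by (simp add: mult.assoc)
  qed
  moreover have "- c * real N * (- sin w * inverse (sin w) ^ (N+1) + cos w * (real (N+1) * inverse (sin w) ^ N * (- inverse (sin w) * cos w * inverse (sin w))))
     = c * real N * real (N+1) * inverse (sin w) ^ (N+2) - c * real N ^ 2 * inverse (sin w) ^ N"
  proof -
    have c2: "cos w * cos w = 1 - sin w * sin w" using sin_cos_squared_add[of w] by (simp add: power2_eq_square)
    have si: "sin w * inverse (sin w) = 1" using assms by simp
    let ?u = "inverse (sin w)"
    have "- c * real N * (- sin w * ?u ^ (N+1) + cos w * (real (N+1) * ?u ^ N * (- ?u * cos w * ?u)))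
       = c * real N * ?u^N * ((sin w * ?u) + real (N+1) * (cos w * cos w) * ?u * ?u)"
      by (simp add: algebra_simps)
    also have "\<dots> = c * real N * ?u^N * (1 + real (N+1) * ?u * ?u - real (N+1) * (sin w * ?u) * (sin w * ?u))"
      by (simp only: c2) (simp add: algebra_simps si)
    also have "\<dots> = c * real N * ?u^N * (1 + real (N+1) * ?u * ?u - real (N+1))"
      by (simp only: si) simp
    also have "\<dots> = c * real N * real (N+1) * ?u ^ (N+2) - c * real N ^ 2 * ?u ^ N"
      by (simp add: algebra_simps power2_eq_square)
    finally show ?thesis .
  qed
  ultimately show ?thesis by simp
qed

lemma main:
  "\<forall>z. sin z \<noteq> 0 \<longrightarrow> prod_op k (\<lambda>x. (cosec x)^2) z = fact (2*k+1) * inverse (sin z) ^ (2*k+2)"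
proof (induction k)
  case 0
  then show ?case by (simp add: cosec_def power2_eq_square inverse_eq_divide)
next
  case (Suc k)
  show ?case
  proof (intro allI impI)
    fix z :: real assume sz: "sin z \<noteq> 0"
    define c :: real where "c = fact (2*k+1)"
    define N where "N = 2*k+2"
    let ?F = "prod_op k (\<lambda>x. (cosec x)^2)"
    let ?g = "\<lambda>x. c * inverse (sin x) ^ N"
    let ?h = "\<lambda>x. - c * real N * cos x * inverse (sin x) ^ (N+1)"
    have ev1: "\<forall>\<^sub>F x in nhds w. ?F x = ?g x" if "sin w \<noteq> 0" for w
      using ev_sin[OF that] by eventually_elim (use Suc.IH in \<open>simp add: c_def N_def\<close>)
    have "\<forall>\<^sub>F w in nhds z. \<forall>\<^sub>F x in nhds w. ?F x = ?g x"
      using ev_sin[OF sz] by eventually_elim (use ev1 in auto)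
    have evd: "\<forall>\<^sub>F w in nhds z. deriv ?F w = ?h w"
      using ev_sin[OF sz] proof eventually_elim
      case (elim w)
      have "deriv ?F w = deriv ?g w" by (rule deriv_cong_ev[OF ev1[OF elim] refl])
      also have "\<dots> = ?h w" using d1[OF elim, of c N] by (rule DERIV_imp_deriv)
      finally show ?case .
    qed
    have "deriv (deriv ?F) z = deriv ?h z" by (rule deriv_cong_ev[OF evd refl])
    also have "\<dots> = c * real N * real (N+1) * inverse (sin z) ^ (N+2) - c * real N ^ 2 * inverse (sin z) ^ N"
      using d2[OF sz, of c N] by (rule DERIV_imp_deriv)
    finally have dd: "deriv (deriv ?F) z = \<dots>" .
    have Fz: "?F z = c * inverse (sin z) ^ N" using Suc.IH sz by (simp add: c_def N_def)
    have "prod_op (Suc k) (\<lambda>x. (cosec x)^2) z = deriv (deriv ?F) z + 4 * (real (Suc k))^2 * ?F z"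
      by (simp add: shift_op_def)
    also have "\<dots> = c * real N * real (N+1) * inverse (sin z) ^ (N+2)"
      unfolding dd Fz by (simp add: N_def algebra_simps power2_eq_square)
    also have "\<dots> = fact (2*Suc k+1) * inverse (sin z) ^ (2*Suc k+2)"
      by (simp add: c_def N_def algebra_simps)
    finally show "prod_op (Suc k) (\<lambda>x. (cosec x)^2) z = fact (2*Suc k+1) * inverse (sin z) ^ (2*Suc k+2)" .
  qed
qed

theorem mainTheorem1:
  fixes m :: nat and z :: real
  assumes "m \<ge> 1" and "sin z \<noteq> 0"
  shows "prod_op (m - 1) (\<lambda>x. (cosec x)^2) z = fact (2*m - 1) * (cosec z)^(2*m)"
proof -
  obtain k where m: "m = Suc k" using assms(1) by (cases m) auto
  have "2*m - 1 = 2*k+1" "2*m = 2*k+2" using m by auto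
  then show ?thesis using main[of k] assms(2) m
    by (simp add: cosec_def inverse_eq_divide)
qed

end
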